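(* For every $m\in\mathbb{N}$, \[ \left(\frac{\pi}{3}\right)^{m}=1+m!\sum_{k=1}^{\infty}(-1)^k\frac{Q(m,2k;2)}{(m+2k)!}. \]
   Context: $s(n,k)$ denotes the signed Stirling numbers of the first kind, defined by $\frac{[\ln(1+x)]^k}{k!}=\sum_{n=k}^\infty s(n,k)\frac{x^n}{n!}$ for $|x|<1$; equivalently $\prod_{j=0}^{n-1}(z-j)=\sum_{k=0}^n s(n,k)z^k$. For $m\in\mathbb{N}$, $k\in\mathbb{N}_0$ and $\alpha\in\mathbb{R}$ define \[ Q(m,k;\alpha)=\sum_{\ell=0}^{k}\binom{m+\ell-1}{m-1}\, s(m+k-1,m+\ell-1)\left(\frac{m+k-\alpha}{2}\right)^{\ell}, \] with the convention $0^0=1$. *)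

theory Defs
  imports "HOL-Analysis.Analysis" "HOL-Combinatorics.Stirling"
begin

definition stirling1s :: "nat \<Rightarrow> nat \<Rightarrow> int" where
  "stirling1s n k = (-1) ^ (n - k) * int (stirling n k)"

text \<open>Q(m,k;alpha) for m >= 1.\<close>
definition Q :: "nat \<Rightarrow> nat \<Rightarrow> real \<Rightarrow> real" where
  "Q m k \<alpha> = (\<Sum>l = 0..k. real ((m + l - 1) choose (m - 1))
       * real_of_int (stirling1s (m + k - 1) (m + l - 1))
       * ((real (m + k) - \<alpha>) / 2) ^ l)"

end

theory Submission
  imports Defs
begin


definition tt :: "nat \<Rightarrow> real" where "tt N = (real N - 1) / 2"

definition cc :: "nat \<Rightarrow> nat \<Rightarrow> real" where
  "cc N i = (\<Sum>j=i..N. real_of_int (stirling1s N j) * real (j choose i) * tt N ^ (j - i))"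

lemma signed_stirling_prod:
  "(\<Sum>k\<le>N. real_of_int (stirling1s N k) * z ^ k) = (\<Prod>j<N. z - real j)"
proof -
  have "(\<Prod>j<N. z - real j) = (-1)^N * (\<Prod>j<N. - z + real j)"
    by (induction N) (auto simp: algebra_simps)
  also have "(\<Prod>j<N. - z + real j) = pochhammer (-z) N"
    by (simp add: pochhammer_prod atLeast0LessThan)
  also have "\<dots> = (\<Sum>k\<le>N. real (stirling N k) * (-z) ^ k)"
    by (simp add: stirling_pochhammer)
  also have "(-1)^N * \<dots> = (\<Sum>k\<le>N. real_of_int (stirling1s N k) * z ^ k)"
    unfolding sum_distrib_left
  proof (rule sum.cong[OF refl])
    fix k assume "k \<in> {..N}"
    hence k: "k \<le> N" by simp
    have "(-1::real)^N = (-1)^(N-k) * (-1)^k" using k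
      by (metis le_add_diff_inverse2 power_add)
    thus "(-1)^N * (real (stirling N k) * (-z) ^ k) = real_of_int (stirling1s N k) * z ^ k"
      by (simp add: stirling1s_def power_minus[of z] algebra_simps)
  qed
  finally show ?thesis by simp
qed

lemma sum_swap_tri:
  "(\<Sum>j\<le>(N::nat). \<Sum>i\<le>j. g i j) = (\<Sum>i\<le>N. \<Sum>j=i..N. (g i j :: real))"
proof -
  have a: "(\<Sum>i\<le>N. if i \<le> j then g i j else 0) = (\<Sum>i\<le>j. g i j)" if "j \<le> N" for j
  proof -
    have "(\<Sum>i\<le>N. if i \<le> j then g i j else 0) = (\<Sum>i\<in>{i\<in>{..N}. i\<le>j}. g i j)"
      by (subst sum.inter_filter) auto
    also have "{i\<in>{..N}. i\<le>j} = {..j}" using that by auto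
    finally show ?thesis .
  qed
  have b: "(\<Sum>j\<le>N. if i \<le> j then g i j else 0) = (\<Sum>j=i..N. g i j)" for i
  proof -
    have "(\<Sum>j\<le>N. if i \<le> j then g i j else 0) = (\<Sum>j\<in>{j\<in>{..N}. i\<le>j}. g i j)"
      by (rule sum.inter_filter[symmetric]) simp
    also have "{j\<in>{..N}. i\<le>j} = {i..N}" by auto
    finally show ?thesis .
  qed
  have "(\<Sum>j\<le>N. \<Sum>i\<le>j. g i j) = (\<Sum>j\<le>N. \<Sum>i\<le>N. if i \<le> j then g i j else 0)"
    by (rule sum.cong) (simp_all add: a)
  also have "\<dots> = (\<Sum>i\<le>N. \<Sum>j\<le>N. if i \<le> j then g i j else 0)"
    by (rule sum.swap)
  also have "\<dots> = (\<Sum>i\<le>N. \<Sum>j=i..N. g i j)"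
    by (simp add: b)
  finally show ?thesis .
qed

lemma poly_cc:
  "(\<Sum>i\<le>N. cc N i * w ^ i) = (\<Prod>j<N. tt N + w - real j)"
proof -
  have "(\<Prod>j<N. tt N + w - real j) = (\<Sum>k\<le>N. real_of_int (stirling1s N k) * (w + tt N) ^ k)"
    by (subst signed_stirling_prod) (simp add: algebra_simps)
  also have "\<dots> = (\<Sum>k\<le>N. \<Sum>i\<le>k. real_of_int (stirling1s N k) * (real (k choose i) * w ^ i * tt N ^ (k - i)))"
    by (simp add: binomial_ring sum_distrib_left)
  also have "\<dots> = (\<Sum>i\<le>N. \<Sum>k=i..N. real_of_int (stirling1s N k) * (real (k choose i) * w ^ i * tt N ^ (k - i)))"
    by (rule sum_swap_tri)
  also have "\<dots> = (\<Sum>i\<le>N. cc N i * w ^ i)"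
    by (simp add: cc_def sum_distrib_left algebra_simps)
  finally show ?thesis by simp
qed

lemma cc_big: "N < i \<Longrightarrow> cc N i = 0"
  by (simp add: cc_def)

lemma prod_rec:
  "(\<Prod>j<N+2. tt (N+2) + w - real j) = (w^2 - (real N + 1)^2/4) * (\<Prod>j<N. tt N + w - real j)"
proof -
  define f where "f j = tt (N+2) + w - real j" for j
  have "(\<Prod>j<N+2. f j) = (\<Prod>j<Suc N. f j) * f (Suc N)"
    by simp
  also have "(\<Prod>j<Suc N. f j) = f 0 * (\<Prod>j<N. f (Suc j))"
    by (rule prod.lessThan_Suc_shift)
  also have "(\<Prod>j<N. f (Suc j)) = (\<Prod>j<N. tt N + w - real j)"
    by (intro prod.cong refl) (simp add: tt_def f_def)
  finally have eq: "(\<Prod>j<N+2. f j) = f 0 * (\<Prod>j<N. tt N + w - real j) * f (Suc N)" .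
  have ff: "f 0 * f (Suc N) = w^2 - (real N + 1)^2/4"
    by (simp add: f_def tt_def power2_eq_square algebra_simps)
  have "(\<Prod>j<N+2. tt (N+2) + w - real j) = (\<Prod>j<N+2. f j)" by (simp add: f_def)
  also have "\<dots> = (f 0 * f (Suc N)) * (\<Prod>j<N. tt N + w - real j)" by (simp only: eq) (simp add: mult_ac)
  finally show ?thesis by (simp only: ff)
qed

lemma cc_rec:
  "cc (N+2) i = (if 2 \<le> i then cc N (i-2) else 0) - (real N + 1)^2/4 * cc N i"
proof -
  define d where "d i = (if 2 \<le> i then cc N (i-2) else 0) - (real N + 1)^2/4 * cc N i" for i
  have "\<forall>w. (\<Sum>i\<le>N+2. cc (N+2) i * w ^ i) = (\<Sum>i\<le>N+2. d i * w ^ i)"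
  proof
    fix w :: real
    have e1: "(\<Sum>i\<le>N+2. cc N i * w ^ i) = (\<Sum>i\<le>N. cc N i * w ^ i)"
      by (simp add: cc_big)
    have e2: "(\<Sum>i\<le>Suc (Suc N). (if 2 \<le> i then cc N (i-2) else 0) * w ^ i) = w^2 * (\<Sum>i\<le>N. cc N i * w ^ i)"
      apply (subst sum.atMost_Suc_shift)+
      by (simp add: sum_distrib_left power2_eq_square algebra_simps del: sum.atMost_Suc)
    have "(\<Sum>i\<le>N+2. d i * w ^ i) = w^2 * (\<Sum>i\<le>N. cc N i * w ^ i) - (real N + 1)^2/4 * (\<Sum>i\<le>N+2. cc N i * w ^ i)"
      unfolding d_def by (simp add: left_diff_distrib sum_subtractf e2 sum_distrib_left mult.assoc del: sum.atMost_Suc)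
    also have "\<dots> = (\<Sum>i\<le>N+2. cc (N+2) i * w ^ i)"
      by (simp only: e1 poly_cc prod_rec) (simp add: algebra_simps)
    finally show "(\<Sum>i\<le>N+2. cc (N+2) i * w ^ i) = (\<Sum>i\<le>N+2. d i * w ^ i)" ..
  qed
  hence "\<forall>i\<le>N+2. cc (N+2) i = d i" by (simp only: polyfun_eq_coeffs)
  thus ?thesis
    by (cases "i \<le> N+2") (auto simp: d_def cc_big)
qed

lemma Q_cc: "1 \<le> m \<Longrightarrow> Q m k 2 = cc (m+k-1) (m-1)"
proof -
  assume m: "1 \<le> m"
  have tt: "tt (m+k-1) = (real (m+k) - 2)/2" using m by (simp add: tt_def of_nat_diff)
  have "cc (m+k-1) (m-1) = (\<Sum>j=0+(m-1)..k+(m-1). real_of_int (stirling1s (m+k-1) j) * real (j choose (m-1)) * tt (m+k-1) ^ (j - (m-1)))"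
    unfolding cc_def using m by (intro sum.cong) auto
  also have "\<dots> = (\<Sum>l=0..k. real_of_int (stirling1s (m+k-1) (l+(m-1))) * real ((l+(m-1)) choose (m-1)) * tt (m+k-1) ^ l)"
    by (subst sum.shift_bounds_cl_nat_ivl) simp
  also have "\<dots> = Q m k 2"
    unfolding Q_def tt using m by (intro sum.cong refl) (simp add: algebra_simps)
  finally show ?thesis ..
qed



fun bb :: "nat \<Rightarrow> nat \<Rightarrow> real" where
  "bb m 0 = (if m = 0 then 1 else 0)"
| "bb m (Suc 0) = (if m = 1 then 1 else 0)"
| "bb m (Suc (Suc n)) = (real n)^2/4 * bb m n + (if 2 \<le> m then bb (m-2) n else 0)"

lemma bb_nz: "bb m n \<noteq> 0 \<Longrightarrow> m \<le> n \<and> even (n - m)"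
proof (induction m n rule: bb.induct)
  case (1 m)
  thus ?case by (cases "m = 0") auto
next
  case (2 m)
  thus ?case by (cases "m = 1") auto
next
  case (3 m n)
  show ?case
  proof (cases "bb m n = 0")
    case True
    have "2 \<le> m"
    proof (rule ccontr)
      assume "\<not> 2 \<le> m"
      hence "bb m (Suc (Suc n)) = (real n)^2/4 * bb m n" by simp
      with True "3.prems" show False by simp
    qed
    hence "bb m (Suc (Suc n)) = (real n)^2/4 * bb m n + bb (m-2) n" by simp
    with True "3.prems" have "bb (m-2) n \<noteq> 0" by simp
    with "3.IH"(2) \<open>2 \<le> m\<close> have h: "m - 2 \<le> n \<and> even (n - (m-2))" by blast
    have eq: "Suc (Suc n) - m = n - (m-2)" using \<open>2 \<le> m\<close> h by arith
    have le: "m \<le> Suc (Suc n)" using \<open>2 \<le> m\<close> h by arith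
    show ?thesis unfolding eq using le h by blast
  next
    case False
    with "3.IH"(1) have "m \<le> n \<and> even (n - m)" by blast
    moreover have "Suc (Suc n) - m = Suc (Suc (n - m))" using calculation by arith
    ultimately show ?thesis by presburger
  qed
qed

lemma bb0: "0 < n \<Longrightarrow> bb 0 n = 0"
  using bb_nz[of 0 n] by (induction "0::nat" n rule: bb.induct) auto

lemma bb_same: "bb m m = 1"
proof (induction m rule: less_induct)
  case (less m)
  show ?case
  proof (cases "m < 2")
    case True thus ?thesis by (cases m) (auto simp: less_Suc_eq)
  next
    case False
    then obtain p where p: "m = Suc (Suc p)" by (metis add_2_eq_Suc le_Suc_ex not_less)
    have "bb m p = 0" using bb_nz[of m p] p by auto
    thus ?thesis using less[of p] p by simp
  qed
qed

lemma bb_val: "1 \<le> m \<Longrightarrow> bb m (m + 2*k) = (-1)^k * cc (m + 2*k - 1) (m - 1)"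
proof (induction m arbitrary: k rule: less_induct)
  case (less m)
  show ?case
  proof (induction k)
    case 0
    have "cc (m-1) (m-1) = 1" by (simp add: cc_def stirling1s_def)
    thus ?case by (simp add: bb_same)
  next
    case (Suc k)
    define N where "N = m + 2*k - 1"
    have N1: "real N + 1 = real (m + 2*k)" using less.prems by (simp add: N_def of_nat_diff)
    have eqN: "m + 2 * Suc k - 1 = N + 2" using less.prems by (simp add: N_def)
    have "bb m (m + 2 * Suc k) = (real (m+2*k))^2/4 * bb m (m+2*k) + (if 2 \<le> m then bb (m-2) (m+2*k) else 0)"
      by (simp add: numeral_2_eq_2)
    also have "(if 2 \<le> m then bb (m-2) (m+2*k) else 0) = (if 3 \<le> m then (-1)^(Suc k) * cc N (m-3) else 0)"
    proof (cases "3 \<le> m")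
      case True
      have "bb (m-2) ((m-2) + 2*Suc k) = (-1)^(Suc k) * cc ((m-2) + 2*Suc k - 1) (m-2-1)"
        using True by (intro less.IH) auto
      moreover have "(m-2) + 2*Suc k = m + 2*k" "(m-2) + 2*Suc k - 1 = N" "m-2-1 = m-3"
        using True by (auto simp: N_def)
      ultimately have "bb (m-2) (m+2*k) = (-1)^(Suc k) * cc N (m-3)" by (simp only:)
      thus ?thesis using True by simp
    next
      case False
      show ?thesis
      proof (cases "m = 2")
        case True thus ?thesis using bb0[of "m + 2*k"] by simp
      qed (use False in auto)
    qed
    also have "bb m (m+2*k) = (-1)^k * cc N (m-1)" using Suc by (simp add: N_def)
    finally have calc: "bb m (m + 2 * Suc k) = (real (m+2*k))^2/4 * ((-1)^k * cc N (m-1)) + (if 3 \<le> m then (-1)^(Suc k) * cc N (m-3) else 0)" .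
    have cr: "cc (N+2) (m-1) = (if 3 \<le> m then cc N (m-3) else 0) - (real (m+2*k))^2/4 * cc N (m-1)"
    proof -
      have "cc (N+2) (m-1) = (if 2 \<le> m-1 then cc N (m-1-2) else 0) - (real N + 1)^2/4 * cc N (m-1)"
        by (rule cc_rec)
      moreover have "(2 \<le> m-1) = (3 \<le> m)" "m-1-2 = m-3" by auto
      ultimately show ?thesis by (simp only: N1)
    qed
    show ?case unfolding eqN cr calc
      by (cases "3 \<le> m") (simp_all add: algebra_simps)
  qed
qed



definition aa :: "nat \<Rightarrow> nat \<Rightarrow> real" where "aa m n = bb m n / fact n"
definition S :: "nat \<Rightarrow> real \<Rightarrow> real" where "S m x = (\<Sum>n. aa m n * x^n)"
definition S1 :: "nat \<Rightarrow> real \<Rightarrow> real" where "S1 m x = (\<Sum>n. diffs (aa m) n * x^n)"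
definition S2 :: "nat \<Rightarrow> real \<Rightarrow> real" where "S2 m x = (\<Sum>n. diffs (diffs (aa m)) n * x^n)"

lemma bb_bound: "0 \<le> bb m n \<and> bb m n \<le> 4/3 * (3/4)^n * fact n"
proof (induction m n rule: bb.induct)
  case (3 m n)
  define B where "B = 4/3 * (3/4::real)^n * fact n"
  have B0: "0 \<le> B" by (simp add: B_def)
  have e: "bb m (Suc (Suc n)) = (real n)^2/4 * bb m n + (if 2 \<le> m then bb (m-2) n else 0)" by simp
  have h1: "0 \<le> bb m n" "bb m n \<le> B" using "3.IH"(1) by (auto simp: B_def)
  have h2: "0 \<le> (if 2 \<le> m then bb (m-2) n else 0)" "(if 2 \<le> m then bb (m-2) n else 0) \<le> B"
    using "3.IH"(2) by (auto simp: B_def)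
  have "bb m (Suc (Suc n)) \<le> (real n)^2/4 * B + B"
    unfolding e using h1 h2 by (intro add_mono mult_left_mono) auto
  also have "\<dots> = ((real n)^2/4 + 1) * B" by (simp add: algebra_simps)
  also have "\<dots> \<le> (9/16 * (real n + 1) * (real n + 2)) * B"
    by (intro mult_right_mono B0) (simp add: algebra_simps power2_eq_square)
  also have "\<dots> = 4/3 * (3/4)^(Suc (Suc n)) * fact (Suc (Suc n))"
    by (simp add: B_def algebra_simps)
  finally show ?case using h1 h2 e by auto
qed auto

lemma aa_summable: "norm (z::real) < 4/3 \<Longrightarrow> summable (\<lambda>n. aa m n * z^n)"
proof -
  assume z: "norm z < 4/3"
  have g: "summable (\<lambda>n. 4/3 * (3 * \<bar>z\<bar> / 4)^n)"
    using z by (intro summable_mult summable_geometric) auto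
  show ?thesis
  proof (rule summable_comparison_test'[OF g])
    fix n :: nat
    have "norm (aa m n * z^n) = bb m n / fact n * \<bar>z\<bar>^n"
      using bb_bound[of m n] by (simp add: aa_def abs_mult power_abs)
    also have "\<dots> \<le> (4/3 * (3/4)^n * fact n) / fact n * \<bar>z\<bar>^n"
      using bb_bound[of m n] by (intro mult_right_mono divide_right_mono) auto
    also have "\<dots> = 4/3 * (3 * \<bar>z\<bar> / 4)^n" by (simp add: power_divide power_mult_distrib)
    finally show "norm (aa m n * z^n) \<le> 4/3 * (3 * \<bar>z\<bar> / 4)^n" .
  qed
qed

lemma d1_summable: "norm (z::real) < 4/3 \<Longrightarrow> summable (\<lambda>n. diffs (aa m) n * z^n)"
  by (rule termdiff_converges[where K="4/3"]) (auto intro: aa_summable)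

lemma d2_summable: "norm (z::real) < 4/3 \<Longrightarrow> summable (\<lambda>n. diffs (diffs (aa m)) n * z^n)"
  by (rule termdiff_converges[where K="4/3"]) (auto intro: d1_summable)

lemma S_deriv: "norm (x::real) < 4/3 \<Longrightarrow> (S m has_field_derivative S1 m x) (at x)"
proof -
  assume x: "norm x < 4/3"
  have "S m = (\<lambda>x. \<Sum>n. aa m n * x^n)" by (rule ext) (simp add: S_def)
  thus ?thesis unfolding S1_def using termdiffs_strong'[of "4/3" "aa m" x] x aa_summable by auto
qed

lemma S1_deriv: "norm (x::real) < 4/3 \<Longrightarrow> (S1 m has_field_derivative S2 m x) (at x)"
proof -
  assume x: "norm x < 4/3"
  have "S1 m = (\<lambda>x. \<Sum>n. diffs (aa m) n * x^n)" by (rule ext) (simp add: S1_def)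
  thus ?thesis unfolding S2_def using termdiffs_strong'[of "4/3" "diffs (aa m)" x] x d1_summable by auto
qed

lemma fact_Suc_div: "real (Suc n) * (c / fact (Suc n)) = (c :: real) / fact n"
proof -
  have "fact (Suc n) = real (Suc n) * (fact n :: real)" by (simp only: fact_Suc of_nat_Suc)
  moreover have "fact n > (0::real)" by simp
  ultimately show ?thesis by (simp del: of_nat_Suc)
qed

lemma d1: "diffs (aa m) n = bb m (Suc n) / fact n"
proof -
  have "diffs (aa m) n = real (Suc n) * (bb m (Suc n) / fact (Suc n))"
    by (simp only: diffs_def aa_def of_nat_id)
  thus ?thesis by (simp only: fact_Suc_div)
qed

lemma d2: "diffs (diffs (aa m)) n = bb m (Suc (Suc n)) / fact n"
proof -
  have "diffs (diffs (aa m)) n = real (Suc n) * (bb m (Suc (Suc n)) / fact (Suc n))"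
    by (simp only: diffs_def[of "diffs (aa m)"] d1 of_nat_id)
  thus ?thesis by (simp only: fact_Suc_div)
qed

lemma ode:
  assumes x: "norm (x::real) < 4/3"
  shows "4 * S2 m x = x^2 * S2 m x + x * S1 m x + (if 2 \<le> m then 4 else 0) * S (m-2) x"
proof -
  define c :: real where "c = (if 2 \<le> m then 4 else 0)"
  define f where "f n = real n * aa m n * x^n" for n
  define g where "g n = real n * (real n - 1) * aa m n * x^n" for n
  have s2: "(\<lambda>n. bb m (Suc (Suc n)) / fact n * x^n) sums S2 m x"
    using summable_sums[OF d2_summable[OF x, of m]] by (simp add: S2_def d2)
  have s1: "(\<lambda>n. bb m (Suc n) / fact n * x^n) sums S1 m x"
    using summable_sums[OF d1_summable[OF x, of m]] by (simp add: S1_def d1)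
  have s0: "(\<lambda>n. c * (aa (m-2) n * x^n)) sums (c * S (m-2) x)"
    using sums_mult[OF summable_sums[OF aa_summable[OF x, of "m-2"]], of c] by (simp add: S_def)
  have "(\<lambda>n. f (Suc n)) sums (x * S1 m x)"
  proof -
    have "(\<lambda>n. x * (bb m (Suc n) / fact n * x^n)) sums (x * S1 m x)"
      by (rule sums_mult[OF s1])
    moreover have "f (Suc n) = x * (bb m (Suc n) / fact n * x^n)" for n
    proof -
      have "f (Suc n) = (real (Suc n) * (bb m (Suc n) / fact (Suc n))) * x^(Suc n)"
        by (simp only: f_def aa_def mult.assoc)
      also have "\<dots> = x * (bb m (Suc n) / fact n * x^n)" by (simp only: fact_Suc_div) (simp add: algebra_simps)
      finally show ?thesis .
    qed
    ultimately show ?thesis by simp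
  qed
  hence "f sums (x * S1 m x + f 0)"
    using sums_Suc_iff[of f "x * S1 m x"] by blast
  hence sf: "f sums (x * S1 m x)" by (simp add: f_def)
  have "(\<lambda>n. g (Suc (Suc n))) sums (x^2 * S2 m x)"
  proof -
    have "(\<lambda>n. x^2 * (bb m (Suc (Suc n)) / fact n * x^n)) sums (x^2 * S2 m x)"
      by (rule sums_mult[OF s2])
    moreover have "g (Suc (Suc n)) = x^2 * (bb m (Suc (Suc n)) / fact n * x^n)" for n
    proof -
      have "g (Suc (Suc n)) = real (Suc n) * (real (Suc (Suc n)) * (bb m (Suc (Suc n)) / fact (Suc (Suc n)))) * x^(Suc (Suc n))"
        by (simp add: g_def aa_def algebra_simps add_divide_distrib del: fact_Suc bb.simps)
      also have "\<dots> = x^2 * (bb m (Suc (Suc n)) / fact n * x^n)" by (simp only: fact_Suc_div) (simp add: algebra_simps power2_eq_square)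
      finally show ?thesis .
    qed
    ultimately show ?thesis by simp
  qed
  hence "(\<lambda>n. g (Suc n)) sums (x^2 * S2 m x + g (Suc 0))"
    using sums_Suc_iff[of "\<lambda>n. g (Suc n)" "x^2 * S2 m x"] by blast
  hence "(\<lambda>n. g (Suc n)) sums (x^2 * S2 m x)" by (simp add: g_def)
  hence "g sums (x^2 * S2 m x + g 0)"
    using sums_Suc_iff[of g "x^2 * S2 m x"] by blast
  hence sg: "g sums (x^2 * S2 m x)" by (simp add: g_def)
  have "(\<lambda>n. g n + f n + c * (aa (m-2) n * x^n)) sums (x^2 * S2 m x + x * S1 m x + c * S (m-2) x)"
    by (intro sums_add sg sf s0)
  moreover have "g n + f n + c * (aa (m-2) n * x^n) = 4 * (bb m (Suc (Suc n)) / fact n * x^n)" for n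
    by (simp add: g_def f_def c_def aa_def algebra_simps power2_eq_square add_divide_distrib)
  ultimately have A: "(\<lambda>n. 4 * (bb m (Suc (Suc n)) / fact n * x^n)) sums (x^2 * S2 m x + x * S1 m x + c * S (m-2) x)"
    by simp
  have B: "(\<lambda>n. 4 * (bb m (Suc (Suc n)) / fact n * x^n)) sums (4 * S2 m x)"
    by (rule sums_mult[OF s2])
  have "4 * S2 m x = x^2 * S2 m x + x * S1 m x + c * S (m-2) x"
    by (rule sums_unique2[OF B A])
  thus ?thesis by (simp only: c_def)
qed

lemma sqrt_deriv: "\<bar>y::real\<bar> < 2 \<Longrightarrow> ((\<lambda>y. sqrt (4 - y^2)) has_real_derivative (- y / sqrt (4 - y^2))) (at y)"
proof -
  assume y: "\<bar>y\<bar> < 2"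
  have "\<bar>y\<bar> * \<bar>y\<bar> < 2 * 2" using y by (intro mult_strict_mono) auto
  hence "y^2 < 4" by (simp add: power2_eq_square)
  hence p: "0 < 4 - y^2" by simp
  have d: "DERIV sqrt (4 - y^2) :> inverse (sqrt (4 - y^2)) / 2" by (rule DERIV_real_sqrt[OF p])
  have e: "((\<lambda>y. 4 - y^2) has_real_derivative (- (2 * y))) (at y)"
    by (auto intro!: derivative_eq_intros)
  have "((\<lambda>y. sqrt (4 - y^2)) has_real_derivative (inverse (sqrt (4 - y^2)) / 2 * (- (2 * y)))) (at y)"
    by (rule DERIV_chain2[OF d e])
  moreover have "inverse (sqrt (4 - y^2)) / 2 * (- (2 * y)) = - y / sqrt (4 - y^2)"
    by (simp add: field_simps)
  ultimately show ?thesis by simp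
qed

lemma S1_0: "S1 0 y = 0"
  by (simp add: S1_def d1 bb0)

lemma S_at0: "S m 0 = bb m 0"
  by (simp only: S_def powser_zero) (simp add: aa_def)

lemma S1_at0: "S1 m 0 = bb m 1"
  by (simp only: S1_def powser_zero) (simp add: d1)

lemma first_order:
  "1 \<le> m \<Longrightarrow> \<bar>x::real\<bar> < 4/3 \<Longrightarrow> sqrt (4 - x^2) * S1 m x = 2 * S (m-1) x"
proof (induction m arbitrary: x rule: less_induct)
  case (less m)
  define D where "D y = sqrt (4 - y^2) * S1 m y - 2 * S (m-1) y" for y
  have "\<exists>c. \<forall>y\<in>ball 0 (4/3). D y = c"
  proof (rule has_field_derivative_zero_constant)
    show "convex (ball (0::real) (4/3))" by simp
  next
    fix y :: real assume "y \<in> ball 0 (4/3)"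
    hence y: "\<bar>y\<bar> < 4/3" by simp
    hence y2: "\<bar>y\<bar> < 2" by simp
    have "\<bar>y\<bar> * \<bar>y\<bar> < 2 * 2" using y2 by (intro mult_strict_mono) auto
    hence "y^2 < 4" by (simp add: power2_eq_square)
    hence p: "0 < 4 - y^2" by simp
    define r where "r = sqrt (4 - y^2)"
    have r0: "r > 0" using p by (simp add: r_def)
    have rr: "r * r = 4 - y^2" using p by (simp add: r_def)
    have "(D has_field_derivative (- y / r * S1 m y + r * S2 m y - 2 * S1 (m-1) y)) (at y)"
    proof -
      have a1: "((\<lambda>y. sqrt (4 - y^2)) has_real_derivative (- y / r)) (at y)"
        unfolding r_def by (rule sqrt_deriv[OF y2])
      have a2: "(S1 m has_real_derivative S2 m y) (at y)" using y by (intro S1_deriv) simp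
      have a3: "(S (m-1) has_real_derivative S1 (m-1) y) (at y)" using y by (intro S_deriv) simp
      have "((\<lambda>y. sqrt (4 - y^2) * S1 m y) has_real_derivative (- y / r * S1 m y + sqrt (4 - y^2) * S2 m y)) (at y)"
        using DERIV_mult[OF a1 a2] by (simp add: algebra_simps)
      moreover have "((\<lambda>y. 2 * S (m-1) y) has_real_derivative (2 * S1 (m-1) y)) (at y)"
        using DERIV_cmult[OF a3, of 2] by simp
      ultimately have "((\<lambda>y. sqrt (4 - y^2) * S1 m y - 2 * S (m-1) y) has_real_derivative
          (- y / r * S1 m y + sqrt (4 - y^2) * S2 m y - 2 * S1 (m-1) y)) (at y)"
        by (rule DERIV_diff)
      thus ?thesis unfolding D_def[abs_def] r_def by simp
    qed
    moreover have "- y / r * S1 m y + r * S2 m y - 2 * S1 (m-1) y = 0"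
    proof -
      have o: "(4 - y^2) * S2 m y - y * S1 m y = (if 2 \<le> m then 4 else 0) * S (m-2) y"
        using ode[of y m] y by (simp add: algebra_simps)
      have "- y / r * S1 m y + r * S2 m y = ((r * r) * S2 m y - y * S1 m y) / r"
        using r0 by (simp add: field_simps)
      also have "\<dots> = (if 2 \<le> m then 4 else 0) * S (m-2) y / r" by (simp only: rr o)
      finally have e: "- y / r * S1 m y + r * S2 m y = (if 2 \<le> m then 4 else 0) * S (m-2) y / r" .
      show ?thesis
      proof (cases "2 \<le> m")
        case True
        have "r * S1 (m-1) y = 2 * S (m-1-1) y"
          unfolding r_def using True y by (intro less.IH) auto
        moreover have "m-1-1 = m-2" by simp
        ultimately have "S1 (m-1) y = 2 * S (m-2) y / r" using r0 by (simp add: field_simps)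
        thus ?thesis using e True by simp
      next
        case False
        hence "m = 1" using less.prems by simp
        thus ?thesis using e by (simp add: S1_0)
      qed
    qed
    ultimately show "(D has_field_derivative 0) (at y within ball 0 (4/3))"
      by (simp add: has_field_derivative_at_within)
  qed
  then obtain c where c: "\<And>y. y \<in> ball 0 (4/3) \<Longrightarrow> D y = c" by blast
  have "D x = D 0" using c[of x] c[of 0] less.prems by simp
  also have "D 0 = 0"
  proof -
    have "sqrt (4::real) = 2" by (simp add: real_sqrt_eq_iff)
    moreover have "bb m (Suc 0) = bb (m-1) 0"
      using less.prems by auto
    ultimately show ?thesis by (simp add: D_def S1_at0 S_at0 del: bb.simps)
  qed
  finally show ?case by (simp add: D_def)
qed

lemma S_0: "S 0 x = 1"
proof -
  have "(\<lambda>n. aa 0 n * x^n) = (\<lambda>n. if n = 0 then 1 else 0)"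
    by (rule ext) (simp add: aa_def bb0)
  moreover have "(\<lambda>n::nat. if n = 0 then 1 else (0::real)) sums 1"
    using sums_single[of 0 "\<lambda>_. 1::real"] by simp
  ultimately show ?thesis unfolding S_def by (simp add: sums_iff)
qed

lemma h_deriv:
  assumes y2: "\<bar>y::real\<bar> < 2"
  shows "((\<lambda>y. (2*arcsin(y/2))^(Suc m) / fact (Suc m)) has_real_derivative
          (2 * ((2*arcsin(y/2))^m / fact m) / sqrt (4 - y^2))) (at y)"
proof -
  have "\<bar>y\<bar> * \<bar>y\<bar> < 2 * 2" using y2 by (intro mult_strict_mono) auto
  hence "y^2 < 4" by (simp add: power2_eq_square)
  hence p: "0 < 4 - y^2" by simp
  have s: "sqrt (1 - (y/2)^2) = sqrt (4 - y^2) / 2"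
  proof -
    have e: "1 - (y/2)^2 = (4 - y^2) / 4" by (simp add: field_simps power2_eq_square)
    have "sqrt (4::real) = 2" by (simp add: real_sqrt_eq_iff)
    thus ?thesis by (simp only: e real_sqrt_divide)
  qed
  have a: "((\<lambda>y. arcsin (y/2)) has_real_derivative (inverse (sqrt (1 - (y/2)^2)) * (1/2))) (at y)"
  proof -
    have "-1 < y/2" "y/2 < 1" using y2 by auto
    from DERIV_arcsin[OF this] have d: "DERIV arcsin (y/2) :> inverse (sqrt (1 - (y/2)^2))" .
    have "((\<lambda>y. y/2) has_real_derivative (1/2)) (at y)"
      by (auto intro!: derivative_eq_intros)
    from DERIV_chain2[OF d this] show ?thesis .
  qed
  have "((\<lambda>y. (2*arcsin(y/2))^(Suc m) / fact (Suc m)) has_real_derivative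
          ((1 + real m) * ((2 * (inverse (sqrt (1 - (y/2)^2)) * (1/2))) * (2*arcsin(y/2))^m) / fact (Suc m))) (at y)"
    by (rule DERIV_cdivide[OF DERIV_power_Suc[OF DERIV_cmult[OF a, of 2]]])
  moreover have "(1 + real m) * ((2 * (inverse (sqrt (1 - (y/2)^2)) * (1/2))) * (2*arcsin(y/2))^m) / fact (Suc m)
      = 2 * ((2*arcsin(y/2))^m / fact m) / sqrt (4 - y^2)"
  proof -
    define r where "r = sqrt (4 - y^2)"
    define A where "A = (2*arcsin(y/2))^m"
    have r0: "r > 0" using p by (simp add: r_def)
    have F0: "fact m > (0::real)" by simp
    have m0: "1 + real m > 0" by simp
    have i: "inverse (r/2) * (1/2) = 1 / r" using r0 by (simp add: field_simps)
    have f: "fact (Suc m) = (1 + real m) * (fact m :: real)" by simp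
    have c: "(1 + real m) * X / ((1 + real m) * fact m) = X / fact m" for X :: real
      using m0 by (rule nonzero_mult_divide_mult_cancel_left[OF less_imp_neq[symmetric]])
    have "(1 + real m) * (2 * (inverse (r/2) * (1/2)) * A) / fact (Suc m) = 2 * (1/r) * A / fact m"
      unfolding f i by (rule c)
    also have "\<dots> = 2 * (A / fact m) / r" by simp
    finally show ?thesis unfolding s r_def[symmetric] A_def[symmetric] .
  qed
  ultimately show ?thesis by simp
qed

lemma S_arcsin: "\<bar>x::real\<bar> < 4/3 \<Longrightarrow> S m x = (2*arcsin(x/2))^m / fact m"
proof (induction m arbitrary: x)
  case 0
  thus ?case by (simp add: S_0)
next
  case (Suc m)
  define F where "F y = S (Suc m) y - (2*arcsin(y/2))^(Suc m) / fact (Suc m)" for y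
  have "\<exists>c. \<forall>y\<in>ball 0 (4/3). F y = c"
  proof (rule has_field_derivative_zero_constant)
    show "convex (ball (0::real) (4/3))" by simp
  next
    fix y :: real assume "y \<in> ball 0 (4/3)"
    hence y: "\<bar>y\<bar> < 4/3" by simp
    hence y2: "\<bar>y\<bar> < 2" by simp
    have "\<bar>y\<bar> * \<bar>y\<bar> < 2 * 2" using y2 by (intro mult_strict_mono) auto
    hence "y^2 < 4" by (simp add: power2_eq_square)
    hence r0: "0 < sqrt (4 - y^2)" by simp
    have a1: "(S (Suc m) has_real_derivative S1 (Suc m) y) (at y)" using y by (intro S_deriv) simp
    have "(F has_real_derivative (S1 (Suc m) y - 2 * ((2*arcsin(y/2))^m / fact m) / sqrt (4 - y^2))) (at y)"
      unfolding F_def[abs_def] by (rule DERIV_diff[OF a1 h_deriv[OF y2]])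
    moreover have "S1 (Suc m) y = 2 * ((2*arcsin(y/2))^m / fact m) / sqrt (4 - y^2)"
    proof -
      have "sqrt (4 - y^2) * S1 (Suc m) y = 2 * S m y" using first_order[of "Suc m" y] y by simp
      hence "S1 (Suc m) y = 2 * S m y / sqrt (4 - y^2)" using r0 by (simp add: field_simps)
      thus ?thesis using Suc.IH[OF y] by simp
    qed
    ultimately show "(F has_field_derivative 0) (at y within ball 0 (4/3))"
      by (simp add: has_field_derivative_at_within)
  qed
  then obtain c where c: "\<And>y. y \<in> ball 0 (4/3) \<Longrightarrow> F y = c" by blast
  have "F x = F 0" using c[of x] c[of 0] Suc.prems by simp
  also have "F 0 = 0" by (simp add: F_def S_at0)
  finally show ?case by (simp add: F_def)
qed

theorem mainTheorem14:
  fixes m :: nat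
  assumes "m \<ge> 1"
  shows "summable (\<lambda>k. (-1) ^ (k + 1) * Q m (2 * (k + 1)) 2 / fact (m + 2 * (k + 1)))
    \<and> (pi / 3) ^ m = 1 + fact m * (\<Sum>k. (-1) ^ (k + 1) * Q m (2 * (k + 1)) 2 / fact (m + 2 * (k + 1)))"
proof -
  have m: "1 \<le> m" using assms .
  have "S m 1 = (pi/3)^m / fact m"
    using S_arcsin[of 1 m] by simp
  hence s1: "(\<lambda>n. bb m n / fact n) sums ((pi/3)^m / fact m)"
    using summable_sums[OF aa_summable[of 1 m]] by (simp add: S_def aa_def)
  define g where "g k = m + 2*k" for k
  have sm: "strict_mono g" by (auto simp: strict_mono_def g_def)
  have z: "bb m n / fact n = 0" if "n \<notin> range g" for n
  proof (rule ccontr)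
    assume "bb m n / fact n \<noteq> 0"
    hence "bb m n \<noteq> 0" by auto
    from bb_nz[OF this] have "m \<le> n" "even (n - m)" by auto
    from \<open>even (n - m)\<close> obtain j where "n - m = 2*j" by (rule evenE)
    hence "n = g j" using \<open>m \<le> n\<close> by (simp add: g_def)
    thus False using that by auto
  qed
  define f where "f k = (-1)^k * Q m (2*k) 2 / fact (m + 2*k)" for k
  have fe: "f k = bb m (g k) / fact (g k)" for k
    unfolding f_def g_def using bb_val[OF m, of k] Q_cc[OF m, of "2*k"] by simp
  have "f sums ((pi/3)^m / fact m)"
    unfolding fe using sums_mono_reindex[OF sm, of "\<lambda>n. bb m n / fact n"] z s1 by simp
  hence "(\<lambda>k. f (Suc k)) sums ((pi/3)^m / fact m - f 0)"
    using sums_Suc_iff[of f "(pi/3)^m / fact m - f 0"] by simp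
  moreover have "f 0 = 1 / fact m" using fe[of 0] by (simp add: g_def bb_same)
  moreover have "(\<lambda>k. f (Suc k)) = (\<lambda>k. (-1) ^ (k + 1) * Q m (2 * (k + 1)) 2 / fact (m + 2 * (k + 1)))"
    by (rule ext) (simp add: f_def)
  ultimately have ss: "(\<lambda>k. (-1) ^ (k + 1) * Q m (2 * (k + 1)) 2 / fact (m + 2 * (k + 1))) sums ((pi/3)^m / fact m - 1 / fact m)"
    by simp
  have "(pi/3)^m = 1 + fact m * ((pi/3)^m / fact m - 1 / fact m)"
    by (simp add: field_simps)
  thus ?thesis using ss by (simp add: sums_iff)
qed

end
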